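(* Let $G$ be a connected graph on $n$ vertices that is not a tree. Let $Z_{\mathrm{sink},0}$ be the number of sink-free orientations of $G$ and $Z_{\mathrm{sink},1}$ the number of orientations of $G$ with exactly one sink. Then $\frac{Z_{\mathrm{sink},1}}{Z_{\mathrm{sink},0}}\le n(n-1)$.
   Context: An orientation assigns each edge $\{u,v\}$ a direction $(u,v)$ or $(v,u)$; a sink is a vertex all of whose incident edges are directed towards it; a sink-free orientation has no sink. *)

theory Defs
  imports Complex_Main "HOL-Library.FuncSet"
begin

definition simple_graph :: "'a set \<Rightarrow> 'a set set \<Rightarrow> bool" where
  "simple_graph V E \<longleftrightarrow> finite V \<and> (\<forall>e\<in>E. e \<subseteq> V \<and> card e = 2)"

definition adj :: "'a set set \<Rightarrow> 'a \<Rightarrow> 'a \<Rightarrow> bool" where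
  "adj E u v \<longleftrightarrow> {u, v} \<in> E"

definition connected_graph :: "'a set \<Rightarrow> 'a set set \<Rightarrow> bool" where
  "connected_graph V E \<longleftrightarrow> V \<noteq> {} \<and> (\<forall>u\<in>V. \<forall>v\<in>V. (adj E)\<^sup>*\<^sup>* u v)"

definition is_cycle :: "'a set set \<Rightarrow> 'a list \<Rightarrow> bool" where
  "is_cycle E cs \<longleftrightarrow> length cs \<ge> 3 \<and> distinct cs
     \<and> (\<forall>i. Suc i < length cs \<longrightarrow> adj E (cs ! i) (cs ! Suc i))
     \<and> adj E (last cs) (hd cs)"

definition acyclic_graph :: "'a set set \<Rightarrow> bool" where
  "acyclic_graph E \<longleftrightarrow> \<not> (\<exists>cs. is_cycle E cs)"

definition is_tree :: "'a set \<Rightarrow> 'a set set \<Rightarrow> bool" where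
  "is_tree V E \<longleftrightarrow> connected_graph V E \<and> acyclic_graph E"

text \<open>An orientation assigns to each edge its head (the endpoint it is directed towards).\<close>
definition orientations :: "'a set set \<Rightarrow> ('a set \<Rightarrow> 'a) set" where
  "orientations E = (\<Pi>\<^sub>E e\<in>E. e)"

definition is_sink :: "'a set set \<Rightarrow> ('a set \<Rightarrow> 'a) \<Rightarrow> 'a \<Rightarrow> bool" where
  "is_sink E h v \<longleftrightarrow> (\<forall>e\<in>E. v \<in> e \<longrightarrow> h e = v)"

definition sinks :: "'a set \<Rightarrow> 'a set set \<Rightarrow> ('a set \<Rightarrow> 'a) \<Rightarrow> 'a set" where
  "sinks V E h = {v\<in>V. is_sink E h v}"

definition Z_sink0 :: "'a set \<Rightarrow> 'a set set \<Rightarrow> nat" where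
  "Z_sink0 V E = card {h\<in>orientations E. sinks V E h = {}}"

definition Z_sink1 :: "'a set \<Rightarrow> 'a set set \<Rightarrow> nat" where
  "Z_sink1 V E = card {h\<in>orientations E. card (sinks V E h) = 1}"

end

theory Submission
  imports Defs
begin

definition other :: "'a set \<Rightarrow> 'a \<Rightarrow> 'a" where
  "other e x = (SOME y. y \<in> e \<and> y \<noteq> x)"

lemma other_props:
  assumes "card e = 2" "x \<in> e"
  shows "other e x \<in> e" "other e x \<noteq> x" "e = {x, other e x}"
proof -
  obtain a b where ab: "e = {a,b}" "a \<noteq> b" using card_2_iff[THEN iffD1, OF assms(1)] by blast
  have ex: "\<exists>y. y \<in> e \<and> y \<noteq> x"
  proof (cases "x = a")
    case True then show ?thesis using ab by (intro exI[of _ b]) simp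
  next
    case False then show ?thesis using ab by (intro exI[of _ a]) simp
  qed
  have *: "other e x \<in> e \<and> other e x \<noteq> x" unfolding other_def using someI_ex[OF ex] .
  then show "other e x \<in> e" "other e x \<noteq> x" by auto
  obtain z where z: "z = other e x" by simp
  have "z \<in> {a,b}" "x \<in> {a,b}" "z \<noteq> x" using * ab(1) assms(2) unfolding z[symmetric] by simp_all
  then have "{a,b} = {x,z}" using ab(2) by auto
  then show "e = {x, other e x}" using ab(1) unfolding z by simp
qed

lemma other_eq:
  assumes "card e = 2" "x \<in> e" "y \<in> e" "y \<noteq> x"
  shows "other e x = y"
proof -
  obtain z where z: "z = other e x" by simp
  have "e = {x, z}" unfolding z by (rule other_props(3)[OF assms(1,2)])
  then have "y \<in> {x, z}" using assms(3) by simp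
  then show ?thesis using assms(4) z by auto
qed

lemma other_other:
  assumes "card e = 2" "x \<in> e"
  shows "other e (other e x) = x"
  by (rule other_eq[OF assms(1) other_props(1)[OF assms] assms(2)]) (use other_props(2)[OF assms] in auto)

definition flip :: "'a set set \<Rightarrow> ('a set \<Rightarrow> 'a) \<Rightarrow> ('a set \<Rightarrow> 'a)" where
  "flip P h = (\<lambda>e. if e \<in> P then other e (h e) else h e)"

definition nxt :: "'a set set \<Rightarrow> ('a set \<Rightarrow> 'a) \<Rightarrow> 'a \<Rightarrow> 'a" where
  "nxt E h x = (SOME y. {x,y} \<in> E \<and> h {x,y} = y)"

definition walk :: "'a set set \<Rightarrow> ('a set \<Rightarrow> 'a) \<Rightarrow> 'a \<Rightarrow> nat \<Rightarrow> 'a" where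
  "walk E h a i = (nxt E h ^^ i) a"

definition R :: "'a set set \<Rightarrow> ('a set \<Rightarrow> 'a) \<Rightarrow> 'a \<Rightarrow> 'a \<Rightarrow> ('a set \<Rightarrow> 'a)" where
  "R E h a b = flip {{walk E h a i, walk E h a (Suc i)} | i. i < (LEAST i. 0 < i \<and> walk E h a i = b)} h"

lemma orient_iff: "h \<in> orientations E \<longleftrightarrow> (\<forall>e\<in>E. h e \<in> e) \<and> (\<forall>e. e \<notin> E \<longrightarrow> h e = undefined)"
  unfolding orientations_def PiE_iff extensional_def by auto

context
  fixes V :: "'a set" and E :: "'a set set"
  assumes sg: "simple_graph V E"
begin

lemma card2: "e \<in> E \<Longrightarrow> card e = 2" using sg unfolding simple_graph_def by auto
lemma subV: "e \<in> E \<Longrightarrow> e \<subseteq> V" using sg unfolding simple_graph_def by auto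

lemma flip_recover:
  assumes or: "\<sigma> \<in> orientations E" and sk: "sinks V E \<sigma> = {v}"
   and k1: "1 \<le> k" and p0: "p 0 = v" and inj: "inj_on p {0..k}"
   and pe: "\<And>i. i < k \<Longrightarrow> {p i, p (Suc i)} \<in> E \<and> \<sigma> {p i, p (Suc i)} = p i"
   and pu: "\<And>i e. 0 < i \<Longrightarrow> i < k \<Longrightarrow> e \<in> E \<Longrightarrow> p i \<in> e \<Longrightarrow> \<sigma> e \<noteq> p i \<Longrightarrow> e = {p (i-1), p i}"
   and pk: "\<exists>e\<in>E. p k \<in> e \<and> \<sigma> e \<noteq> p k \<and> e \<noteq> {p (k-1), p k}"
  shows "\<exists>\<tau>\<in>orientations E. sinks V E \<tau> = {} \<and> R E \<tau> v (p k) = \<sigma> \<and> p k \<in> V \<and> p k \<noteq> v"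
proof -
  have sin: "\<And>e. e \<in> E \<Longrightarrow> \<sigma> e \<in> e" and sout: "\<And>e. e \<notin> E \<Longrightarrow> \<sigma> e = undefined"
    using or unfolding orient_iff by auto
  have vsink: "\<And>e. e \<in> E \<Longrightarrow> v \<in> e \<Longrightarrow> \<sigma> e = v" and vV: "v \<in> V"
    using sk unfolding sinks_def is_sink_def by auto
  have nsink: "\<And>x. x \<in> V \<Longrightarrow> x \<noteq> v \<Longrightarrow> \<exists>e\<in>E. x \<in> e \<and> \<sigma> e \<noteq> x"
    using sk unfolding sinks_def is_sink_def by blast
  define P where "P = {{p i, p (Suc i)} | i. i < k}"
  define \<tau> where "\<tau> = flip P \<sigma>"
  have PE: "P \<subseteq> E" using pe unfolding P_def by auto
  have pinj: "\<And>i j. i \<le> k \<Longrightarrow> j \<le> k \<Longrightarrow> p i = p j \<Longrightarrow> i = j"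
    using inj unfolding inj_on_def by auto
  have inP: "\<And>e j. e \<in> P \<Longrightarrow> p j \<in> e \<Longrightarrow> j \<le> k \<Longrightarrow>
      (j < k \<and> e = {p j, p (Suc j)}) \<or> (0 < j \<and> e = {p (j-1), p j})"
  proof -
    fix e j assume "e \<in> P" "p j \<in> e" "j \<le> k"
    then obtain i where i: "i < k" "e = {p i, p (Suc i)}" unfolding P_def by auto
    then have "p j = p i \<or> p j = p (Suc i)" using \<open>p j \<in> e\<close> by auto
    then have "j = i \<or> j = Suc i" using pinj i \<open>j \<le> k\<close> by (metis Suc_leI less_imp_le_nat)
    then show "(j < k \<and> e = {p j, p (Suc j)}) \<or> (0 < j \<and> e = {p (j-1), p j})"
      using i by auto
  qed
  have Pvert: "\<And>e x. e \<in> P \<Longrightarrow> x \<in> e \<Longrightarrow> \<exists>j\<le>k. x = p j"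
  proof -
    fix e x assume "e \<in> P" "x \<in> e"
    then obtain i where i: "i < k" "e = {p i, p (Suc i)}" unfolding P_def by auto
    then have "x = p i \<or> x = p (Suc i)" using \<open>x \<in> e\<close> by auto
    then show "\<exists>j\<le>k. x = p j" using i by (metis Suc_leI less_imp_le_nat)
  qed
  have pne: "\<And>i. i < k \<Longrightarrow> p (Suc i) \<noteq> p i"
  proof -
    fix i assume i: "i < k" show "p (Suc i) \<noteq> p i" using pinj[of "Suc i" i] i by auto
  qed
  have tedge: "\<And>i. i < k \<Longrightarrow> \<tau> {p i, p (Suc i)} = p (Suc i)"
  proof -
    fix i assume i: "i < k"
    have "{p i, p (Suc i)} \<in> P" using i unfolding P_def by auto
    then show "\<tau> {p i, p (Suc i)} = p (Suc i)" unfolding \<tau>_def flip_def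
      using pe[OF i] other_eq[OF card2[OF conjunct1[OF pe[OF i]]]] pne[OF i] by auto
  qed
  have tnP: "\<And>e. e \<notin> P \<Longrightarrow> \<tau> e = \<sigma> e" unfolding \<tau>_def flip_def by auto
  have tor: "\<tau> \<in> orientations E"
    unfolding orient_iff
  proof (intro conjI allI ballI impI)
    fix e assume "e \<in> E"
    then show "\<tau> e \<in> e" unfolding \<tau>_def flip_def using sin other_props(1)[OF card2] by auto
  next
    fix e assume "e \<notin> E"
    then have "e \<notin> P" using PE \<open>e \<notin> E\<close> by auto
    then have "\<tau> e = \<sigma> e" by (rule tnP)
    then show "\<tau> e = undefined" using sout[OF \<open>e \<notin> E\<close>] by simp
  qed
  have tsinks: "sinks V E \<tau> = {}"
  proof -
    have "\<exists>e\<in>E. x \<in> e \<and> \<tau> e \<noteq> x" if xV: "x \<in> V" for x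
    proof (cases "\<exists>j\<le>k. x = p j")
      case True
      then obtain j where j: "j \<le> k" "x = p j" by auto
      show ?thesis
      proof (cases "j < k")
        case True
        show ?thesis
          by (rule bexI[of _ "{p j, p (Suc j)}"]) (use tedge[OF True] pe[OF True] pne[OF True] j in auto)
      next
        case False
        then have jk: "j = k" using j by auto
        obtain e where e: "e \<in> E" "p k \<in> e" "\<sigma> e \<noteq> p k" "e \<noteq> {p (k-1), p k}" using pk by auto
        have "e \<notin> P"
        proof
          assume "e \<in> P"
          from inP[OF this e(2)] show False using e(4) by auto
        qed
        then show ?thesis using e tnP jk j by auto
      qed
    next
      case False
      then have "x \<noteq> v" using p0 by auto
      then obtain e where e: "e \<in> E" "x \<in> e" "\<sigma> e \<noteq> x" using nsink xV by auto
      have "e \<notin> P" using Pvert e(2) False by blast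
      then show ?thesis using e tnP by auto
    qed
    then show ?thesis unfolding sinks_def is_sink_def by blast
  qed
  have nxtp: "\<And>i. i < k \<Longrightarrow> nxt E \<tau> (p i) = p (Suc i)"
  proof -
    fix i assume i: "i < k"
    show "nxt E \<tau> (p i) = p (Suc i)" unfolding nxt_def
    proof (rule some_equality)
      show "{p i, p (Suc i)} \<in> E \<and> \<tau> {p i, p (Suc i)} = p (Suc i)" using pe[OF i] tedge[OF i] by auto
    next
      fix y assume y: "{p i, y} \<in> E \<and> \<tau> {p i, y} = y"
      define e where "e = {p i, y}"
      have eE: "e \<in> E" and te: "\<tau> e = y" using y e_def by auto
      have yne: "y \<noteq> p i"
      proof
        assume "y = p i" then have "e = {p i}" using e_def by auto
        then show False using card2[OF eE] by auto
      qed
      show "y = p (Suc i)"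
      proof (cases "e \<in> P")
        case True
        have "p i \<in> e" using e_def by auto
        from inP[OF True this less_imp_le[OF i]] have "(e = {p i, p (Suc i)}) \<or> (0 < i \<and> e = {p (i-1), p i})"
          by blast
        then show ?thesis
        proof
          assume "e = {p i, p (Suc i)}" then show ?thesis using yne e_def by auto
        next
          assume a: "0 < i \<and> e = {p (i-1), p i}"
          then have "\<tau> e = p i" using tedge[of "i-1"] i by auto
          then show ?thesis using te yne by auto
        qed
      next
        case False
        then have se: "\<sigma> e = y" using te tnP by auto
        show ?thesis
        proof (cases "i = 0")
          case True
          then show ?thesis using vsink[OF eE] p0 e_def se yne by auto
        next
          case False
          then have "e = {p (i-1), p i}" using pu[of i e] i eE e_def se yne by auto
          moreover have "{p (i-1), p i} \<in> P" unfolding P_def using False i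
            by (auto intro!: exI[of _ "i-1"])
          ultimately show ?thesis using \<open>e \<notin> P\<close> by auto
        qed
      qed
    qed
  qed
  have walkp: "\<And>i. i \<le> k \<Longrightarrow> walk E \<tau> v i = p i"
  proof -
    fix i show "i \<le> k \<Longrightarrow> walk E \<tau> v i = p i"
    proof (induction i)
      case 0 then show ?case using p0 unfolding walk_def by auto
    next
      case (Suc i)
      then have "walk E \<tau> v i = p i" by auto
      then show ?case using nxtp[of i] Suc.prems unfolding walk_def by auto
    qed
  qed
  have least: "(LEAST i. 0 < i \<and> walk E \<tau> v i = p k) = k"
  proof (rule Least_equality)
    show "0 < k \<and> walk E \<tau> v k = p k" using k1 walkp by auto
  next
    fix y assume y: "0 < y \<and> walk E \<tau> v y = p k"
    show "k \<le> y"
    proof (rule ccontr)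
      assume "\<not> k \<le> y"
      then have "p y = p k" using walkp[of y] y by auto
      then show False using pinj[of y k] \<open>\<not> k \<le> y\<close> by auto
    qed
  qed
  have wp: "\<And>i. i < k \<Longrightarrow> {walk E \<tau> v i, walk E \<tau> v (Suc i)} = {p i, p (Suc i)}"
    using walkp by simp
  have pathset: "{{walk E \<tau> v i, walk E \<tau> v (Suc i)} | i. i < k} = P"
    unfolding P_def by (rule Collect_cong) (metis wp)
  have "R E \<tau> v (p k) = \<sigma>"
  proof
    fix e
    show "R E \<tau> v (p k) e = \<sigma> e"
    proof (cases "e \<in> P")
      case True
      then have eE: "e \<in> E" using PE by auto
      have "R E \<tau> v (p k) e = other e (\<tau> e)" unfolding R_def least pathset flip_def using True by auto
      also have "\<dots> = other e (other e (\<sigma> e))" unfolding \<tau>_def flip_def using True by auto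
      also have "\<dots> = \<sigma> e" using other_other[OF card2[OF eE] sin[OF eE]] .
      finally show ?thesis .
    next
      case False
      have "R E \<tau> v (p k) e = \<tau> e" unfolding R_def least pathset flip_def using False by simp
      then show ?thesis using tnP[OF False] by simp
    qed
  qed
  moreover have "p k \<in> V" using subV[OF conjunct1[OF pe[of "k-1"]]] k1 by auto
  moreover have "p k \<noteq> v" using pinj[of k 0] p0 k1 by auto
  ultimately show ?thesis using tor tsinks by auto
qed

end

definition chain :: "'a set set \<Rightarrow> ('a set \<Rightarrow> 'a) \<Rightarrow> 'a \<Rightarrow> (nat \<Rightarrow> 'a) \<Rightarrow> nat \<Rightarrow> bool" where
 "chain E \<sigma> v p m \<longleftrightarrow> p 0 = v \<and> inj_on p {0..m}
    \<and> (\<forall>i<m. {p i, p (Suc i)} \<in> E \<and> \<sigma> {p i, p (Suc i)} = p i)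
    \<and> (\<forall>i e. 0 < i \<longrightarrow> i \<le> m \<longrightarrow> e \<in> E \<longrightarrow> p i \<in> e \<longrightarrow> \<sigma> e \<noteq> p i \<longrightarrow> e = {p (i-1), p i})"

lemma chainD:
  assumes "chain E \<sigma> v p m"
  shows "p 0 = v" "inj_on p {0..m}" "\<And>i. i < m \<Longrightarrow> {p i, p (Suc i)} \<in> E \<and> \<sigma> {p i, p (Suc i)} = p i"
    "\<And>i e. 0 < i \<Longrightarrow> i \<le> m \<Longrightarrow> e \<in> E \<Longrightarrow> p i \<in> e \<Longrightarrow> \<sigma> e \<noteq> p i \<Longrightarrow> e = {p (i-1), p i}"
  using assms unfolding chain_def by blast+

lemma chain_prefix: "chain E \<sigma> v p m \<Longrightarrow> j \<le> m \<Longrightarrow> chain E \<sigma> v p j"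
  unfolding chain_def by (auto intro: inj_on_subset)

lemma cycle_adj:
  assumes "is_cycle E cs" "i < length cs"
  shows "adj E (cs ! i) (cs ! (Suc i mod length cs))"
proof (cases "Suc i < length cs")
  case True
  then show ?thesis using assms unfolding is_cycle_def by auto
next
  case False
  then have i: "Suc i = length cs" using assms(2) by auto
  have ne: "cs \<noteq> []" using assms(2) by auto
  have "length cs - 1 = i" using i by auto
  then have "cs ! i = last cs" using last_conv_nth[OF ne] by simp
  moreover have "cs ! (Suc i mod length cs) = hd cs" using i hd_conv_nth[OF ne] by simp
  ultimately show ?thesis using assms unfolding is_cycle_def by auto
qed

lemma mod_neq: "3 \<le> (L::nat) \<Longrightarrow> j < L \<Longrightarrow> Suc j mod L \<noteq> (j + L - 1) mod L"
proof -
  assume L: "3 \<le> L" and j: "j < L"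
  show ?thesis
  proof (cases "j = 0")
    case True then show ?thesis using L by auto
  next
    case False
    then have e: "j + L - 1 = (j - 1) + L" by auto
    have m: "(j + L - 1) mod L = j - 1" unfolding e using j by simp
    show ?thesis
    proof (cases "Suc j = L")
      case True then show ?thesis using m L by auto
    next
      case False then show ?thesis using m j by auto
    qed
  qed
qed

lemma mod_back: "0 < (L::nat) \<Longrightarrow> j < L \<Longrightarrow> Suc ((j + L - 1) mod L) mod L = j"
proof -
  assume L: "0 < L" and j: "j < L"
  have "Suc ((j + L - 1) mod L) mod L = Suc (j + L - 1) mod L" by (simp add: mod_Suc_eq)
  also have "Suc (j + L - 1) = j + L" using L by auto
  finally show ?thesis using j by simp
qed

context
  fixes V :: "'a set" and E :: "'a set set"
  assumes sg: "simple_graph V E"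
begin

lemma exists_path:
  assumes conn: "connected_graph V E" and nt: "\<not> is_tree V E"
   and or: "\<sigma> \<in> orientations E" and sk: "sinks V E \<sigma> = {v}"
  shows "\<exists>p k. 1 \<le> k \<and> p 0 = v \<and> inj_on p {0..k}
     \<and> (\<forall>i<k. {p i, p (Suc i)} \<in> E \<and> \<sigma> {p i, p (Suc i)} = p i)
     \<and> (\<forall>i e. 0 < i \<longrightarrow> i < k \<longrightarrow> e \<in> E \<longrightarrow> p i \<in> e \<longrightarrow> \<sigma> e \<noteq> p i \<longrightarrow> e = {p (i-1), p i})
     \<and> (\<exists>e\<in>E. p k \<in> e \<and> \<sigma> e \<noteq> p k \<and> e \<noteq> {p (k-1), p k})"
proof -
  have c2: "\<And>e. e \<in> E \<Longrightarrow> card e = 2" using card2[OF sg] .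
  have sV: "\<And>e. e \<in> E \<Longrightarrow> e \<subseteq> V" using subV[OF sg] .
  have sin: "\<And>e. e \<in> E \<Longrightarrow> \<sigma> e \<in> e"
    using or unfolding orient_iff by auto
  have vsink: "\<And>e. e \<in> E \<Longrightarrow> v \<in> e \<Longrightarrow> \<sigma> e = v" and vV: "v \<in> V"
    using sk unfolding sinks_def is_sink_def by auto
  define B where "B = {x. \<exists>p m. chain E \<sigma> v p m \<and> p m = x}"
  have inB: "\<And>p m j. chain E \<sigma> v p m \<Longrightarrow> j \<le> m \<Longrightarrow> p j \<in> B"
  proof -
    fix p m j assume "chain E \<sigma> v p m" "j \<le> m"
    then have "chain E \<sigma> v p j" by (rule chain_prefix)
    then show "p j \<in> B" unfolding B_def mem_Collect_eq by (intro exI[of _ p] exI[of _ j] conjI refl)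
  qed
  have vB: "v \<in> B" unfolding B_def mem_Collect_eq
    by (rule exI[of _ "\<lambda>_. v"], rule exI[of _ 0]) (simp add: chain_def)
  show ?thesis
  proof (cases "\<exists>e\<in>E. \<sigma> e \<in> B \<and> other e (\<sigma> e) \<notin> B")
    case True
    then obtain e where e: "e\<in>E" "\<sigma> e \<in> B" "other e (\<sigma> e) \<notin> B" by blast
    obtain x where x: "\<sigma> e = x" by simp
    obtain y where y: "other e x = y" by simp
    have xB: "x \<in> B" using e(2) unfolding x .
    have yB: "y \<notin> B" using e(3) unfolding x y .
    obtain p m where pm: "chain E \<sigma> v p m" "p m = x" using xB B_def by auto
    have exy1: "e = {x, y}" using other_props(3)[OF c2[OF e(1)] sin[OF e(1)]] unfolding x y .
    have exy2: "y \<noteq> x" using other_props(2)[OF c2[OF e(1)] sin[OF e(1)]] unfolding x y .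
    note exy = exy1 exy2
    define q where "q = p(Suc m := y)"
    have qp: "\<And>i. i \<le> m \<Longrightarrow> q i = p i" "q (Suc m) = y" unfolding q_def by auto
    have ynot: "y \<notin> p ` {0..m}"
    proof
      assume "y \<in> p ` {0..m}"
      then obtain j where j: "j \<le> m" "y = p j" by auto
      then have "y \<in> B" using inB[OF pm(1) j(1)] by simp
      then show False using yB by simp
    qed
    have p0: "p 0 = v" and pinj: "inj_on p {0..m}"
      and pe: "\<And>i. i < m \<Longrightarrow> {p i, p (Suc i)} \<in> E \<and> \<sigma> {p i, p (Suc i)} = p i"
      and pu: "\<And>i e. 0 < i \<Longrightarrow> i \<le> m \<Longrightarrow> e \<in> E \<Longrightarrow> p i \<in> e \<Longrightarrow> \<sigma> e \<noteq> p i \<Longrightarrow> e = {p (i-1), p i}"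
      using chainD[OF pm(1)] by auto
    have q0: "q 0 = v" using qp(1)[of 0] p0 by auto
    have qinj: "inj_on q {0..Suc m}"
    proof -
      have a: "inj_on q {0..m}" using pinj inj_on_cong[of "{0..m}" q p] qp(1) by auto
      have b: "q ` {0..m} = p ` {0..m}" using qp(1) by auto
      have "{0..Suc m} = insert (Suc m) {0..m}" by auto
      then show ?thesis using a b ynot qp(2) by (simp add: inj_on_insert)
    qed
    have qe: "\<forall>i<Suc m. {q i, q (Suc i)} \<in> E \<and> \<sigma> {q i, q (Suc i)} = q i"
    proof (intro allI impI)
      fix i assume i: "i < Suc m"
      show "{q i, q (Suc i)} \<in> E \<and> \<sigma> {q i, q (Suc i)} = q i"
      proof (cases "i < m")
        case True then show ?thesis using pe qp(1)[of i] qp(1)[of "Suc i"] by auto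
      next
        case False
        then have "i = m" using i by auto
        then show ?thesis using qp e(1) exy1 pm(2) x by auto
      qed
    qed
    have qu: "\<forall>i e. 0 < i \<longrightarrow> i < Suc m \<longrightarrow> e \<in> E \<longrightarrow> q i \<in> e \<longrightarrow> \<sigma> e \<noteq> q i \<longrightarrow> e = {q (i-1), q i}"
    proof (intro allI impI)
      fix i e' assume a: "0 < i" "i < Suc m" "e' \<in> E" "q i \<in> e'" "\<sigma> e' \<noteq> q i"
      have "i \<le> m" "i - 1 \<le> m" using a by auto
      then show "e' = {q (i-1), q i}" using pu[of i e'] a qp(1) by simp
    qed
    show ?thesis
    proof (cases "\<exists>e'\<in>E. y \<in> e' \<and> \<sigma> e' \<noteq> y \<and> e' \<noteq> e")
      case True
      have "{q (Suc m - 1), q (Suc m)} = e" using qp exy pm(2) by auto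
      then have "\<exists>e\<in>E. q (Suc m) \<in> e \<and> \<sigma> e \<noteq> q (Suc m) \<and> e \<noteq> {q (Suc m - 1), q (Suc m)}"
        using True qp(2) by auto
      then show ?thesis using q0 qinj qe qu by (intro exI[of _ q] exI[of _ "Suc m"] conjI) simp_all
    next
      case False
      have "chain E \<sigma> v q (Suc m)" unfolding chain_def
      proof (intro conjI q0 qinj qe allI impI)
        fix i e' assume a: "0 < i" "i \<le> Suc m" "e' \<in> E" "q i \<in> e'" "\<sigma> e' \<noteq> q i"
        show "e' = {q (i-1), q i}"
        proof (cases "i = Suc m")
          case True
          then have "e' = e" using False a qp(2) by auto
          then show ?thesis using True qp exy pm(2) by auto
        next
          case False then show ?thesis using qu a by simp
        qed
      qed
      then have "y \<in> B" using qp(2) unfolding B_def by blast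
      then show ?thesis using yB by auto
    qed
  next
    case False
    then have cl: "\<And>e. e\<in>E \<Longrightarrow> \<sigma> e \<in> B \<Longrightarrow> other e (\<sigma> e) \<in> B" by blast
    have tailB: "\<And>e t. e\<in>E \<Longrightarrow> t \<in> e \<Longrightarrow> t \<in> B \<Longrightarrow> \<sigma> e \<noteq> t \<Longrightarrow> \<sigma> e \<in> B"
    proof -
      fix e t assume a: "e\<in>E" "t \<in> e" "t \<in> B" "\<sigma> e \<noteq> t"
      obtain p m where pm: "chain E \<sigma> v p m" "p m = t" using a(3) B_def by auto
      have "m \<noteq> 0"
      proof
        assume "m = 0" then have "t = v" using pm(2) chainD(1)[OF pm(1)] by simp
        then show False using vsink[OF a(1)] a(2,4) by simp
      qed
      then have "e = {p (m-1), p m}" using chainD(4)[OF pm(1), of m e] pm(2) a by simp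
      then have "\<sigma> e = p (m-1)" using sin[OF a(1)] a(4) pm(2) by auto
      then show "\<sigma> e \<in> B" using inB[OF pm(1)] by auto
    qed
    have eB: "\<And>e x. e\<in>E \<Longrightarrow> x \<in> e \<Longrightarrow> x \<in> B \<Longrightarrow> e \<subseteq> B"
    proof -
      fix e x assume a: "e\<in>E" "x \<in> e" "x \<in> B"
      have ee: "e = {\<sigma> e, other e (\<sigma> e)}" using other_props(3)[OF c2[OF a(1)] sin[OF a(1)]] .
      have "\<sigma> e \<in> B" using a tailB by (cases "\<sigma> e = x") auto
      then show "e \<subseteq> B" using cl[OF a(1)] ee by (metis empty_subsetI insert_subset)
    qed
    have VB: "V \<subseteq> B"
    proof
      fix u assume "u \<in> V"
      then have "(adj E)\<^sup>*\<^sup>* v u" using conn vV unfolding connected_graph_def by auto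
      then show "u \<in> B"
      proof (induction rule: rtranclp_induct)
        case base then show ?case using vB .
      next
        case (step a b)
        then have "{a,b} \<in> E" unfolding adj_def by auto
        then show ?case using eB[of "{a,b}" a] step by auto
      qed
    qed
    define d where "d x = (LEAST m. \<exists>p. chain E \<sigma> v p m \<and> p m = x)" for x
    have dex: "\<And>x. x \<in> B \<Longrightarrow> \<exists>p. chain E \<sigma> v p (d x) \<and> p (d x) = x"
    proof -
      fix x assume "x \<in> B"
      then have "\<exists>m p. chain E \<sigma> v p m \<and> p m = x" unfolding B_def by blast
      then show "\<exists>p. chain E \<sigma> v p (d x) \<and> p (d x) = x" unfolding d_def by (rule LeastI_ex)
    qed
    have dle: "\<And>p m. chain E \<sigma> v p m \<Longrightarrow> d (p m) \<le> m"
      unfolding d_def by (rule Least_le) blast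
    have outuniq: "\<And>z e1 e2. z \<in> B \<Longrightarrow> z \<noteq> v \<Longrightarrow> e1 \<in> E \<Longrightarrow> e2 \<in> E \<Longrightarrow> z \<in> e1 \<Longrightarrow> z \<in> e2
        \<Longrightarrow> \<sigma> e1 \<noteq> z \<Longrightarrow> \<sigma> e2 \<noteq> z \<Longrightarrow> e1 = e2"
    proof -
      fix z e1 e2 assume a: "z \<in> B" "z \<noteq> v" "e1 \<in> E" "e2 \<in> E" "z \<in> e1" "z \<in> e2" "\<sigma> e1 \<noteq> z" "\<sigma> e2 \<noteq> z"
      obtain p where p: "chain E \<sigma> v p (d z)" "p (d z) = z" using dex[OF a(1)] by auto
      have "d z \<noteq> 0"
      proof
        assume "d z = 0" then show False using p(2) a(2) chainD(1)[OF p(1)] by simp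
      qed
      then have h1: "e1 = {p (d z - 1), p (d z)}"
        using chainD(4)[OF p(1), of "d z" e1] p(2) a by simp
      have h2: "e2 = {p (d z - 1), p (d z)}"
        using chainD(4)[OF p(1), of "d z" e2] p(2) a \<open>d z \<noteq> 0\<close> by simp
      show "e1 = e2" using h1 h2 by simp
    qed
    have dedge: "\<And>e t. e \<in> E \<Longrightarrow> t \<in> e \<Longrightarrow> \<sigma> e \<noteq> t \<Longrightarrow> d (\<sigma> e) < d t"
    proof -
      fix e t assume a: "e \<in> E" "t \<in> e" "\<sigma> e \<noteq> t"
      have "t \<in> B" using a sV VB by auto
      then obtain p where p: "chain E \<sigma> v p (d t)" "p (d t) = t" using dex by blast
      have "t \<noteq> v" using vsink a by auto
      have "d t \<noteq> 0"
      proof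
        assume "d t = 0" then show False using p(2) \<open>t \<noteq> v\<close> chainD(1)[OF p(1)] by simp
      qed
      then have "e = {p (d t - 1), t}" using chainD(4)[OF p(1), of "d t" e] p(2) a by simp
      then have "\<sigma> e = p (d t - 1)" using sin[OF a(1)] a(3) by auto
      moreover have "d (p (d t - 1)) \<le> d t - 1" using dle chain_prefix[OF p(1)] by auto
      ultimately show "d (\<sigma> e) < d t" using \<open>d t \<noteq> 0\<close> by auto
    qed
    obtain cs where cyc: "is_cycle E cs" using conn nt unfolding is_tree_def acyclic_graph_def by auto
    define L where "L = length cs"
    have L3: "3 \<le> L" using cyc unfolding is_cycle_def L_def by auto
    have dist: "distinct cs" using cyc unfolding is_cycle_def by auto
    have ne: "d ` set cs \<noteq> {}" using L3 L_def by auto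
    obtain z where z: "z \<in> set cs" "d z = Max (d ` set cs)" using Max_in[OF _ ne] by auto
    have zmax: "\<And>y. y \<in> set cs \<Longrightarrow> d y \<le> d z" using z(2) by simp
    obtain j where j: "j < L" "cs ! j = z" using z(1) unfolding L_def by (auto simp: in_set_conv_nth)
    define a where "a = cs ! (Suc j mod L)"
    define b where "b = cs ! ((j + L - 1) mod L)"
    have La: "Suc j mod L < L" and Lb: "(j + L - 1) mod L < L" using L3 by auto
    have aset: "a \<in> set cs" and bset: "b \<in> set cs" unfolding a_def b_def L_def
      using La Lb L_def by auto
    have ea: "{z, a} \<in> E" using cycle_adj[OF cyc, of j] j unfolding adj_def a_def L_def by auto
    have mb: "Suc ((j + L - 1) mod L) mod L = j" using mod_back[of L j] j L3 by auto
    have "adj E (cs ! ((j + L - 1) mod L)) (cs ! (Suc ((j + L - 1) mod L) mod L))"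
      using cycle_adj[OF cyc, of "(j + L - 1) mod L"] Lb unfolding L_def by simp
    then have "adj E b (cs ! j)" unfolding mb b_def .
    then have eb: "{b, z} \<in> E" using j(2) unfolding adj_def by simp
    have za: "z \<noteq> a" proof assume "z = a" then show False using c2[OF ea] by simp qed
    have zb: "z \<noteq> b" proof assume "z = b" then show False using c2[OF eb] by simp qed
    have sa: "\<sigma> {z, a} = a"
    proof (rule ccontr)
      assume "\<sigma> {z, a} \<noteq> a"
      then have "\<sigma> {z,a} = z" using sin[OF ea] by auto
      then have "d z < d a" using dedge[OF ea, of a] za by auto
      then show False using zmax[OF aset] by auto
    qed
    have sb: "\<sigma> {b, z} = b"
    proof (rule ccontr)
      assume "\<sigma> {b, z} \<noteq> b"
      then have "\<sigma> {b,z} = z" using sin[OF eb] by auto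
      then have "d z < d b" using dedge[OF eb, of b] zb by auto
      then show False using zmax[OF bset] by auto
    qed
    have zv: "z \<noteq> v" using vsink[OF ea] sa za by auto
    have zB: "z \<in> B" using sV[OF ea] VB by auto
    have "{z, a} = {b, z}" using outuniq[OF zB zv ea eb] sa sb za zb by auto
    then have "a = b" using za zb by auto
    moreover have "a \<noteq> b" unfolding a_def b_def
      using nth_eq_iff_index_eq[OF dist] La Lb mod_neq[OF L3 j(1)] L_def by auto
    ultimately show ?thesis by auto
  qed
qed

end

theorem theorem17:
  fixes V :: "'a set" and E :: "'a set set"
  assumes "simple_graph V E"
    and "connected_graph V E"
    and "\<not> is_tree V E"
  shows "real (Z_sink1 V E) / real (Z_sink0 V E) \<le> real (card V) * (real (card V) - 1)"
proof -
  note sg = assms(1)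
  define n where "n = card V"
  have finV: "finite V" using sg unfolding simple_graph_def by auto
  have Vne: "V \<noteq> {}" using assms(2) unfolding connected_graph_def by auto
  have n1: "1 \<le> n" using finV Vne n_def by (simp add: Suc_leI card_gt_0_iff)
  define S0 where "S0 = {h\<in>orientations E. sinks V E h = {}}"
  define S1 where "S1 = {h\<in>orientations E. card (sinks V E h) = 1}"
  define Pr where "Pr = {(a,b). a \<in> V \<and> b \<in> V \<and> a \<noteq> b}"
  have finE: "finite E" using sg finV unfolding simple_graph_def
    by (meson Pow_iff finite_Pow_iff rev_finite_subset subsetI)
  have finO: "finite (orientations E)" unfolding orientations_def
    using finE sg unfolding simple_graph_def by (auto intro!: finite_PiE intro: rev_finite_subset[OF finV])
  have finS0: "finite S0" using finO S0_def by auto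
  have Pr_eq: "Pr = V \<times> V - (\<lambda>x. (x,x)) ` V" unfolding Pr_def by auto
  have cardPr: "card Pr = n * (n - 1)"
  proof -
    have "card Pr = card (V \<times> V) - card ((\<lambda>x. (x,x)) ` V)"
      unfolding Pr_eq by (rule card_Diff_subset) (use finV in auto)
    also have "\<dots> = n * n - n"
    proof -
      have "card (V \<times> V) = n * n" unfolding n_def by (rule card_cartesian_product)
      moreover have "card ((\<lambda>x. (x,x)) ` V) = n" unfolding n_def by (rule card_image) (auto simp: inj_on_def)
      ultimately show ?thesis by simp
    qed
    finally show ?thesis by (simp add: diff_mult_distrib2)
  qed
  have finPr: "finite Pr" unfolding Pr_eq using finV by auto
  have sub: "S1 \<subseteq> (\<lambda>(\<tau>, a, b). R E \<tau> a b) ` (S0 \<times> Pr)"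
  proof
    fix \<sigma> assume "\<sigma> \<in> S1"
    then have or: "\<sigma> \<in> orientations E" and c1: "card (sinks V E \<sigma>) = 1" unfolding S1_def by auto
    then obtain v where sk: "sinks V E \<sigma> = {v}" by (auto simp: card_1_singleton_iff)
    have vV: "v \<in> V" using sk unfolding sinks_def by auto
    obtain p k where pk: "1 \<le> k" "p 0 = v" "inj_on p {0..k}"
      "\<forall>i<k. {p i, p (Suc i)} \<in> E \<and> \<sigma> {p i, p (Suc i)} = p i"
      "\<forall>i e. 0 < i \<longrightarrow> i < k \<longrightarrow> e \<in> E \<longrightarrow> p i \<in> e \<longrightarrow> \<sigma> e \<noteq> p i \<longrightarrow> e = {p (i-1), p i}"
      "\<exists>e\<in>E. p k \<in> e \<and> \<sigma> e \<noteq> p k \<and> e \<noteq> {p (k-1), p k}"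
      using exists_path[OF sg assms(2,3) or sk] by blast
    obtain \<tau> where \<tau>: "\<tau> \<in> orientations E" "sinks V E \<tau> = {}" "R E \<tau> v (p k) = \<sigma>" "p k \<in> V" "p k \<noteq> v"
      using flip_recover[OF sg or sk pk(1,2,3)] pk(4,5,6) by blast
    have "(\<tau>, v, p k) \<in> S0 \<times> Pr" using \<tau> vV unfolding S0_def Pr_def by auto
    then show "\<sigma> \<in> (\<lambda>(\<tau>, a, b). R E \<tau> a b) ` (S0 \<times> Pr)" using \<tau>(3) by force
  qed
  have "card S1 \<le> card ((\<lambda>(\<tau>, a, b). R E \<tau> a b) ` (S0 \<times> Pr))"
    by (rule card_mono) (use sub finS0 finPr in auto)
  also have "\<dots> \<le> card (S0 \<times> Pr)" by (rule card_image_le) (use finS0 finPr in auto)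
  also have "\<dots> = card S0 * card Pr" by (rule card_cartesian_product)
  also have "\<dots> = card S0 * (n * (n - 1))" using cardPr by simp
  finally have main: "Z_sink1 V E \<le> Z_sink0 V E * (n * (n - 1))"
    unfolding Z_sink1_def Z_sink0_def S1_def S0_def by simp
  have rr: "real (n * (n - 1)) = real n * (real n - 1)" using n1 by (simp add: of_nat_diff)
  show ?thesis
  proof (cases "Z_sink0 V E = 0")
    case True
    then show ?thesis using n1 n_def by auto
  next
    case False
    then have pos: "0 < real (Z_sink0 V E)" by auto
    have "real (Z_sink1 V E) \<le> real (Z_sink0 V E) * (real n * (real n - 1))"
      using main rr by (metis of_nat_le_iff of_nat_mult)
    then show ?thesis using pos n_def by (simp add: divide_le_eq mult.commute)
  qed
qed

end
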